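(* Let $q:V\to\overline K/\overline R$ be a non-trivial generalized $(\sigma,\varepsilon)$-quadratic form with sesquilinearization $f$, and let $E=(e_i)_{i\in I}$ and $E'=(e'_i)_{i\in I}$ be two bases of $V$ consisting of $q$-singular vectors, indexed by the same totally ordered set $I$. Let $\overline R_{E,E'}$ be the smallest closed subgroup of $\overline K$ containing $\{\overline{g_{E'}(e_i,e_i)}\}_{i\in I}$ and define $\delta_{E,E'}:V\to\overline K$ by $\delta_{E,E'}(x)=\overline{g_E(x,x)}-\overline{g_{E'}(x,x)}$. Then $\overline R_{E,E'}$ is a vector subspace of $(\overline R,\circ)$, $\delta_{E,E'}$ is a surjective $K$-linear map from $V$ onto $\overline R_{E,E'}$ (indeed $\delta_{E,E'}(\sum_i e_i\lambda_i)=-\sum_i\overline{g_{E'}(e_i,e_i)}\circ\lambda_i$), $\delta_{E',E}=-\delta_{E,E'}$ and $\overline R_{E,E'}=\overline R_{E',E}$.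
   Context: $K$ division ring, $(\sigma,\varepsilon)$ admissible pair ($\sigma$ anti-automorphism, $\varepsilon^\sigma\varepsilon=1$, $t^{\sigma^2}=\varepsilon t\varepsilon^{-1}$). $K_{\sigma,\varepsilon}=\{t-t^\sigma\varepsilon\}$, $K^{\sigma,\varepsilon}=\{t:t=-t^\sigma\varepsilon\}$, $\overline K=K/K_{\sigma,\varepsilon}$, $\bar t$ class of $t$, $\bar t\circ\lambda=\overline{\lambda^\sigma t\lambda}$; $K^{\sigma,\varepsilon}/K_{\sigma,\varepsilon}$ is a right $K$-vector space under $\circ$. Closed subgroup: stable under all $\circ\lambda$. Generalized $(\sigma,\varepsilon)$-quadratic form with co-defect closed $\overline R$: $q:V\to\overline K/\overline R$ ($V$ right $K$-vector space) with $q(x\lambda)=q(x)\circ\lambda$ (where $(\bar t+\overline R)\circ\lambda=\bar t\circ\lambda+\overline R$) and trace-valued $(\sigma,\varepsilon)$-sesquilinear $f$ ($f(x\lambda,y\mu)=\lambda^\sigma f(x,y)\mu$, $f(y,x)=f(x,y)^\sigma\varepsilon$, $f(x,x)\in\{t+t^\sigma\varepsilon\}$) with $q(x+y)=q(x)+q(y)+(\overline{f(x,y)}+\overline R)$. For non-trivial $q$, $\overline R$ is a $K$-subspace of $K^{\sigma,\varepsilon}/K_{\sigma,\varepsilon}$. $x$ is $q$-singular if $q(x)=\overline R$. For a basis $E=(e_i)_{i\in I}$ of $q$-singular vectors with $I$ totally ordered, $g_E(\sum_i e_i\lambda_i,\sum_j e_j\mu_j)=\sum_{i<j}\lambda_i^\sigma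 f(e_i,e_j)\mu_j$; it satisfies $q(x)=\overline{g_E(x,x)}+\overline R$. *)

theory Defs
  imports Main
begin

definition admissible_pair :: "('k::division_ring \<Rightarrow> 'k) \<Rightarrow> 'k \<Rightarrow> bool" where
  "admissible_pair \<sigma> \<epsilon> \<longleftrightarrow>
     bij \<sigma> \<and> (\<forall>a b. \<sigma> (a + b) = \<sigma> a + \<sigma> b) \<and> (\<forall>a b. \<sigma> (a * b) = \<sigma> b * \<sigma> a) \<and>
     \<sigma> \<epsilon> * \<epsilon> = 1 \<and> (\<forall>t. \<sigma> (\<sigma> t) = \<epsilon> * t * inverse \<epsilon>)"

definition Kse :: "('k::division_ring \<Rightarrow> 'k) \<Rightarrow> 'k \<Rightarrow> 'k set" where
  "Kse \<sigma> \<epsilon> = {t - \<sigma> t * \<epsilon> | t. True}"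

definition Ksym :: "('k::division_ring \<Rightarrow> 'k) \<Rightarrow> 'k \<Rightarrow> 'k set" where
  "Ksym \<sigma> \<epsilon> = {t. t = - (\<sigma> t * \<epsilon>)}"

definition Ktr :: "('k::division_ring \<Rightarrow> 'k) \<Rightarrow> 'k \<Rightarrow> 'k set" where
  "Ktr \<sigma> \<epsilon> = {t + \<sigma> t * \<epsilon> | t. True}"

text \<open>The operation circ on representatives: class(t) circ lambda = class(sigma(lambda) t lambda).\<close>
definition circ :: "('k::division_ring \<Rightarrow> 'k) \<Rightarrow> 'k \<Rightarrow> 'k \<Rightarrow> 'k" where
  "circ \<sigma> t l = \<sigma> l * t * l"

text \<open>Subgroups of Kbar = K / K_{sigma,epsilon} are represented by their preimages in K,
  i.e. additive subgroups of K containing K_{sigma,epsilon}.\<close>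
definition closed_subgroup :: "('k::division_ring \<Rightarrow> 'k) \<Rightarrow> 'k \<Rightarrow> 'k set \<Rightarrow> bool" where
  "closed_subgroup \<sigma> \<epsilon> S \<longleftrightarrow>
     Kse \<sigma> \<epsilon> \<subseteq> S \<and> (\<forall>a\<in>S. \<forall>b\<in>S. a - b \<in> S) \<and> (\<forall>t\<in>S. \<forall>l. circ \<sigma> t l \<in> S)"

definition closed_hull :: "('k::division_ring \<Rightarrow> 'k) \<Rightarrow> 'k \<Rightarrow> 'k set \<Rightarrow> 'k set" where
  "closed_hull \<sigma> \<epsilon> A = \<Inter> {S. closed_subgroup \<sigma> \<epsilon> S \<and> A \<subseteq> S}"

text \<open>S (preimage) is a vector subspace of (Rbar, circ): a closed subgroup of Kbar
  contained in Rbar, where Rbar is contained in K^{sigma,epsilon}/K_{sigma,epsilon}.\<close>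
definition rsubspace :: "('k::division_ring \<Rightarrow> 'k) \<Rightarrow> 'k \<Rightarrow> 'k set \<Rightarrow> 'k set \<Rightarrow> bool" where
  "rsubspace \<sigma> \<epsilon> R S \<longleftrightarrow> closed_subgroup \<sigma> \<epsilon> S \<and> S \<subseteq> R \<and> S \<subseteq> Ksym \<sigma> \<epsilon>"

definition right_vector_space :: "('v::ab_group_add \<Rightarrow> 'k::division_ring \<Rightarrow> 'v) \<Rightarrow> bool" where
  "right_vector_space smult \<longleftrightarrow>
     (\<forall>x l m. smult x (l + m) = smult x l + smult x m) \<and>
     (\<forall>x y l. smult (x + y) l = smult x l + smult y l) \<and>
     (\<forall>x l m. smult x (l * m) = smult (smult x l) m) \<and>
     (\<forall>x. smult x 1 = x)"

definition finsupp :: "('i \<Rightarrow> 'k::zero) \<Rightarrow> bool" where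
  "finsupp c \<longleftrightarrow> finite {i. c i \<noteq> 0}"

definition lincomb :: "('v::ab_group_add \<Rightarrow> 'k::division_ring \<Rightarrow> 'v) \<Rightarrow> ('i \<Rightarrow> 'v) \<Rightarrow> ('i \<Rightarrow> 'k) \<Rightarrow> 'v" where
  "lincomb smult e c = (\<Sum>i\<in>{i. c i \<noteq> 0}. smult (e i) (c i))"

definition is_basis :: "('v::ab_group_add \<Rightarrow> 'k::division_ring \<Rightarrow> 'v) \<Rightarrow> ('i \<Rightarrow> 'v) \<Rightarrow> bool" where
  "is_basis smult e \<longleftrightarrow> (\<forall>x. \<exists>!c. finsupp c \<and> x = lincomb smult e c)"

definition coords :: "('v::ab_group_add \<Rightarrow> 'k::division_ring \<Rightarrow> 'v) \<Rightarrow> ('i \<Rightarrow> 'v) \<Rightarrow> 'v \<Rightarrow> ('i \<Rightarrow> 'k)" where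
  "coords smult e x = (THE c. finsupp c \<and> x = lincomb smult e c)"

definition trace_valued_sesq ::
  "('k::division_ring \<Rightarrow> 'k) \<Rightarrow> 'k \<Rightarrow> ('v::ab_group_add \<Rightarrow> 'k \<Rightarrow> 'v) \<Rightarrow> ('v \<Rightarrow> 'v \<Rightarrow> 'k) \<Rightarrow> bool" where
  "trace_valued_sesq \<sigma> \<epsilon> smult f \<longleftrightarrow>
     (\<forall>x y z. f (x + y) z = f x z + f y z) \<and>
     (\<forall>x y z. f x (y + z) = f x y + f x z) \<and>
     (\<forall>x y l m. f (smult x l) (smult y m) = \<sigma> l * f x y * m) \<and>
     (\<forall>x y. f y x = \<sigma> (f x y) * \<epsilon>) \<and>
     (\<forall>x. f x x \<in> Ktr \<sigma> \<epsilon>)"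

text \<open>A generalized (sigma,epsilon)-quadratic form q : V -> Kbar/Rbar with co-defect Rbar
  (given by its preimage R in K) and sesquilinearization f. The value q x is given
  by a representative in K; values are compared modulo R.\<close>
definition gen_quad_form ::
  "('k::division_ring \<Rightarrow> 'k) \<Rightarrow> 'k \<Rightarrow> ('v::ab_group_add \<Rightarrow> 'k \<Rightarrow> 'v) \<Rightarrow> 'k set \<Rightarrow>
   ('v \<Rightarrow> 'k) \<Rightarrow> ('v \<Rightarrow> 'v \<Rightarrow> 'k) \<Rightarrow> bool" where
  "gen_quad_form \<sigma> \<epsilon> smult R q f \<longleftrightarrow>
     closed_subgroup \<sigma> \<epsilon> R \<and> trace_valued_sesq \<sigma> \<epsilon> smult f \<and>
     (\<forall>x l. q (smult x l) - circ \<sigma> (q x) l \<in> R) \<and>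
     (\<forall>x y. q (x + y) - (q x + q y + f x y) \<in> R)"

definition nontrivial_gqf :: "'k set \<Rightarrow> ('v \<Rightarrow> 'k) \<Rightarrow> bool" where
  "nontrivial_gqf R q \<longleftrightarrow> (\<exists>x. q x \<notin> R)"

definition q_singular :: "'k set \<Rightarrow> ('v \<Rightarrow> 'k) \<Rightarrow> 'v \<Rightarrow> bool" where
  "q_singular R q x \<longleftrightarrow> q x \<in> R"

definition gE ::
  "('k::division_ring \<Rightarrow> 'k) \<Rightarrow> ('v::ab_group_add \<Rightarrow> 'k \<Rightarrow> 'v) \<Rightarrow> ('v \<Rightarrow> 'v \<Rightarrow> 'k) \<Rightarrow>
   ('i::linorder \<Rightarrow> 'v) \<Rightarrow> 'v \<Rightarrow> 'v \<Rightarrow> 'k" where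
  "gE \<sigma> smult f e x y =
     (let a = coords smult e x; b = coords smult e y in
      \<Sum>(i, j)\<in>{(i, j). a i \<noteq> 0 \<and> b j \<noteq> 0 \<and> i < j}. \<sigma> (a i) * f (e i) (e j) * b j)"

definition deltaEE ::
  "('k::division_ring \<Rightarrow> 'k) \<Rightarrow> ('v::ab_group_add \<Rightarrow> 'k \<Rightarrow> 'v) \<Rightarrow> ('v \<Rightarrow> 'v \<Rightarrow> 'k) \<Rightarrow>
   ('i::linorder \<Rightarrow> 'v) \<Rightarrow> ('i \<Rightarrow> 'v) \<Rightarrow> 'v \<Rightarrow> 'k" where
  "deltaEE \<sigma> smult f e e' x = gE \<sigma> smult f e x x - gE \<sigma> smult f e' x x"

definition REE ::
  "('k::division_ring \<Rightarrow> 'k) \<Rightarrow> 'k \<Rightarrow> ('v::ab_group_add \<Rightarrow> 'k \<Rightarrow> 'v) \<Rightarrow> ('v \<Rightarrow> 'v \<Rightarrow> 'k) \<Rightarrow>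
   ('i::linorder \<Rightarrow> 'v) \<Rightarrow> ('i \<Rightarrow> 'v) \<Rightarrow> 'k set" where
  "REE \<sigma> \<epsilon> smult f e e' = closed_hull \<sigma> \<epsilon> (range (\<lambda>i. gE \<sigma> smult f e' (e i) (e i)))"

end

theory Submission
  imports Defs
begin


locale ctx =
  fixes \<sigma> :: "'k::division_ring \<Rightarrow> 'k" and \<epsilon> :: 'k
    and smult :: "'v::ab_group_add \<Rightarrow> 'k \<Rightarrow> 'v" and f :: "'v \<Rightarrow> 'v \<Rightarrow> 'k"
  assumes adm: "admissible_pair \<sigma> \<epsilon>"
    and vs: "right_vector_space smult"
    and ses: "trace_valued_sesq \<sigma> \<epsilon> smult f"
begin

lemma sig_add: "\<sigma> (a + b) = \<sigma> a + \<sigma> b" using adm unfolding admissible_pair_def by blast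
lemma sig_mult: "\<sigma> (a * b) = \<sigma> b * \<sigma> a" using adm unfolding admissible_pair_def by blast
lemma sig_sig: "\<sigma> (\<sigma> t) = \<epsilon> * t * inverse \<epsilon>" using adm unfolding admissible_pair_def by blast
lemma sig_eps: "\<sigma> \<epsilon> * \<epsilon> = 1" using adm unfolding admissible_pair_def by blast
lemma sig_bij: "bij \<sigma>" using adm unfolding admissible_pair_def by blast
lemma eps_nz: "\<epsilon> \<noteq> 0" using sig_eps by auto
lemma sig0[simp]: "\<sigma> 0 = 0"
proof -
  have "\<sigma> (0 + 0) = \<sigma> 0 + \<sigma> 0" by (rule sig_add)
  thus ?thesis by simp
qed
lemma sig_minus: "\<sigma> (- a) = - \<sigma> a"
proof -
  have "\<sigma> (a + - a) = \<sigma> a + \<sigma> (-a)" by (rule sig_add)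
  thus ?thesis by (simp add: eq_neg_iff_add_eq_0 add.commute)
qed
lemma sig_diff: "\<sigma> (a - b) = \<sigma> a - \<sigma> b"
  using sig_add[of a "-b"] sig_minus[of b] by simp
lemma sig1[simp]: "\<sigma> 1 = 1"
proof -
  obtain a where a: "\<sigma> a = 1" using sig_bij by (metis bij_pointE)
  have "\<sigma> (a * 1) = \<sigma> 1 * \<sigma> a" by (rule sig_mult)
  thus ?thesis using a by simp
qed
lemma sig_sum: "\<sigma> (sum g A) = (\<Sum>x\<in>A. \<sigma> (g x))"
  by (induction A rule: infinite_finite_induct) (auto simp: sig_add)
lemma sig_sig_eps: "\<sigma> (\<sigma> t) * \<epsilon> = \<epsilon> * t"
  using eps_nz by (simp add: sig_sig mult.assoc)

lemma Kse_mem: "t - \<sigma> t * \<epsilon> \<in> Kse \<sigma> \<epsilon>" unfolding Kse_def by blast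
lemma Kse_diff: "a \<in> Kse \<sigma> \<epsilon> \<Longrightarrow> b \<in> Kse \<sigma> \<epsilon> \<Longrightarrow> a - b \<in> Kse \<sigma> \<epsilon>"
proof -
  assume "a \<in> Kse \<sigma> \<epsilon>" "b \<in> Kse \<sigma> \<epsilon>"
  then obtain s t where "a = s - \<sigma> s * \<epsilon>" "b = t - \<sigma> t * \<epsilon>" unfolding Kse_def by blast
  hence "a - b = (s - t) - \<sigma> (s - t) * \<epsilon>" by (simp add: sig_diff algebra_simps)
  thus ?thesis by (simp add: Kse_mem)
qed
lemma Kse0: "0 \<in> Kse \<sigma> \<epsilon>" using Kse_mem[of 0] by simp
lemma Kse_uminus: "a \<in> Kse \<sigma> \<epsilon> \<Longrightarrow> - a \<in> Kse \<sigma> \<epsilon>" using Kse_diff[OF Kse0] by simp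
lemma Kse_add: "a \<in> Kse \<sigma> \<epsilon> \<Longrightarrow> b \<in> Kse \<sigma> \<epsilon> \<Longrightarrow> a + b \<in> Kse \<sigma> \<epsilon>"
  using Kse_diff[of a "-b"] Kse_uminus[of b] by simp
lemma Kse_circ: "a \<in> Kse \<sigma> \<epsilon> \<Longrightarrow> circ \<sigma> a l \<in> Kse \<sigma> \<epsilon>"
proof -
  assume "a \<in> Kse \<sigma> \<epsilon>"
  then obtain t where a: "a = t - \<sigma> t * \<epsilon>" unfolding Kse_def by blast
  have "\<sigma> (\<sigma> l * t * l) * \<epsilon> = \<sigma> l * \<sigma> t * (\<sigma> (\<sigma> l) * \<epsilon>)"
    by (simp add: sig_mult mult.assoc)
  also have "\<dots> = \<sigma> l * (\<sigma> t * \<epsilon>) * l" by (simp add: sig_sig_eps mult.assoc)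
  finally have "circ \<sigma> a l = (\<sigma> l * t * l) - \<sigma> (\<sigma> l * t * l) * \<epsilon>"
    unfolding circ_def a by (simp add: algebra_simps)
  thus ?thesis by (simp add: Kse_mem)
qed

lemma circ_diff: "circ \<sigma> (a - b) l = circ \<sigma> a l - circ \<sigma> b l"
  unfolding circ_def by (simp add: algebra_simps)
lemma circ_uminus: "circ \<sigma> (- a) l = - circ \<sigma> a l"
  unfolding circ_def by (simp add: algebra_simps)
lemma circ_add: "circ \<sigma> (a + b) l = circ \<sigma> a l + circ \<sigma> b l"
  unfolding circ_def by (simp add: algebra_simps)

lemma cs_0: "closed_subgroup \<sigma> \<epsilon> S \<Longrightarrow> 0 \<in> S"
  unfolding closed_subgroup_def using Kse0 by blast
lemma cs_diff: "closed_subgroup \<sigma> \<epsilon> S \<Longrightarrow> a \<in> S \<Longrightarrow> b \<in> S \<Longrightarrow> a - b \<in> S"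
  unfolding closed_subgroup_def by blast
lemma cs_uminus: "closed_subgroup \<sigma> \<epsilon> S \<Longrightarrow> a \<in> S \<Longrightarrow> - a \<in> S"
  using cs_diff[of S 0 a] cs_0 by simp
lemma cs_add: "closed_subgroup \<sigma> \<epsilon> S \<Longrightarrow> a \<in> S \<Longrightarrow> b \<in> S \<Longrightarrow> a + b \<in> S"
  using cs_diff[of S a "-b"] cs_uminus[of S b] by simp
lemma cs_circ: "closed_subgroup \<sigma> \<epsilon> S \<Longrightarrow> a \<in> S \<Longrightarrow> circ \<sigma> a l \<in> S"
  unfolding closed_subgroup_def by blast
lemma cs_Kse: "closed_subgroup \<sigma> \<epsilon> S \<Longrightarrow> a \<in> Kse \<sigma> \<epsilon> \<Longrightarrow> a \<in> S"
  unfolding closed_subgroup_def by blast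
lemma cs_sum: "closed_subgroup \<sigma> \<epsilon> S \<Longrightarrow> (\<And>x. x \<in> A \<Longrightarrow> g x \<in> S) \<Longrightarrow> sum g A \<in> S"
  by (induction A rule: infinite_finite_induct) (auto simp: cs_0 cs_add)

lemma hull_cs: "closed_subgroup \<sigma> \<epsilon> (closed_hull \<sigma> \<epsilon> A)"
  unfolding closed_hull_def closed_subgroup_def by blast
lemma hull_sup: "A \<subseteq> closed_hull \<sigma> \<epsilon> A"
  unfolding closed_hull_def by blast
lemma hull_min: "closed_subgroup \<sigma> \<epsilon> S \<Longrightarrow> A \<subseteq> S \<Longrightarrow> closed_hull \<sigma> \<epsilon> A \<subseteq> S"
  unfolding closed_hull_def by blast

lemma sm_ldist: "smult x (l + m) = smult x l + smult x m" using vs unfolding right_vector_space_def by blast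
lemma sm_rdist: "smult (x + y) l = smult x l + smult y l" using vs unfolding right_vector_space_def by blast
lemma sm_assoc: "smult x (l * m) = smult (smult x l) m" using vs unfolding right_vector_space_def by blast
lemma sm_one[simp]: "smult x 1 = x" using vs unfolding right_vector_space_def by blast
lemma sm_zero[simp]: "smult x 0 = 0"
  using sm_ldist[of x 0 0] by simp
lemma sm_zero_left[simp]: "smult 0 l = 0"
  using sm_rdist[of 0 0 l] by simp
lemma sm_sum: "smult (sum g A) l = (\<Sum>x\<in>A. smult (g x) l)"
  by (induction A rule: infinite_finite_induct) (auto simp: sm_rdist)

lemma f_addl: "f (x + y) z = f x z + f y z" using ses unfolding trace_valued_sesq_def by blast
lemma f_addr: "f x (y + z) = f x y + f x z" using ses unfolding trace_valued_sesq_def by blast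
lemma f_sm: "f (smult x l) (smult y m) = \<sigma> l * f x y * m" using ses unfolding trace_valued_sesq_def by blast
lemma f_sym: "f y x = \<sigma> (f x y) * \<epsilon>" using ses unfolding trace_valued_sesq_def by blast
lemma f_0l[simp]: "f 0 y = 0" using f_addl[of 0 0 y] by simp
lemma f_0r[simp]: "f x 0 = 0" using f_addr[of x 0 0] by simp
lemma f_suml: "f (sum g A) y = (\<Sum>i\<in>A. f (g i) y)"
  by (induction A rule: infinite_finite_induct) (auto simp: f_addl)
lemma f_sumr: "f x (sum g A) = (\<Sum>i\<in>A. f x (g i))"
  by (induction A rule: infinite_finite_induct) (auto simp: f_addr)

end


context ctx begin

abbreviation supp :: "('i \<Rightarrow> 'k) \<Rightarrow> 'i set" where "supp c \<equiv> {i. c i \<noteq> 0}"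

lemma lincomb_eq: "finite S \<Longrightarrow> supp c \<subseteq> S \<Longrightarrow> lincomb smult e c = (\<Sum>i\<in>S. smult (e i) (c i))"
  unfolding lincomb_def by (rule sum.mono_neutral_left) auto

lemma coords_lincomb: "is_basis smult e \<Longrightarrow> finsupp c \<Longrightarrow> coords smult e (lincomb smult e c) = c"
  unfolding coords_def is_basis_def by (rule the1_equality) auto

lemma coords_props: "is_basis smult e \<Longrightarrow> finsupp (coords smult e x) \<and> x = lincomb smult e (coords smult e x)"
  unfolding coords_def is_basis_def using theI'[of "\<lambda>c. finsupp c \<and> x = lincomb smult e c"] by blast

lemma coords_fin: "is_basis smult e \<Longrightarrow> finite (supp (coords smult e x))"
  using coords_props finsupp_def by blast

lemma coords_add: assumes b: "is_basis smult e"
  shows "coords smult e (x + y) = (\<lambda>i. coords smult e x i + coords smult e y i)"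
proof -
  let ?a = "coords smult e x" and ?b = "coords smult e y"
  let ?S = "supp ?a \<union> supp ?b"
  have fS: "finite ?S" using coords_fin[OF b] by blast
  have fs: "finsupp (\<lambda>i. ?a i + ?b i)" unfolding finsupp_def
    by (rule finite_subset[OF _ fS]) auto
  have "lincomb smult e (\<lambda>i. ?a i + ?b i) = (\<Sum>i\<in>?S. smult (e i) (?a i + ?b i))"
    by (rule lincomb_eq[OF fS]) auto
  also have "\<dots> = (\<Sum>i\<in>?S. smult (e i) (?a i)) + (\<Sum>i\<in>?S. smult (e i) (?b i))"
    by (simp add: sm_ldist sum.distrib)
  also have "\<dots> = x + y"
    using lincomb_eq[OF fS, of ?a e] lincomb_eq[OF fS, of ?b e] coords_props[OF b, of x]
      coords_props[OF b, of y] by auto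
  finally show ?thesis using coords_lincomb[OF b fs] by metis
qed

lemma coords_smult: assumes b: "is_basis smult e"
  shows "coords smult e (smult x l) = (\<lambda>i. coords smult e x i * l)"
proof -
  let ?a = "coords smult e x"
  let ?S = "supp ?a"
  have fS: "finite ?S" using coords_fin[OF b] by blast
  have fs: "finsupp (\<lambda>i. ?a i * l)" unfolding finsupp_def
    by (rule finite_subset[OF _ fS]) auto
  have "lincomb smult e (\<lambda>i. ?a i * l) = (\<Sum>i\<in>?S. smult (e i) (?a i * l))"
    by (rule lincomb_eq[OF fS]) auto
  also have "\<dots> = smult (\<Sum>i\<in>?S. smult (e i) (?a i)) l"
    by (simp add: sm_assoc sm_sum)
  also have "\<dots> = smult x l"
    using lincomb_eq[OF fS, of ?a e] coords_props[OF b, of x] by auto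
  finally show ?thesis using coords_lincomb[OF b fs] by metis
qed

lemma coords_basis: assumes b: "is_basis smult e"
  shows "coords smult e (e i) = (\<lambda>j. if j = i then 1 else 0)"
proof -
  have fs: "finsupp (\<lambda>j. if j = i then (1::'k) else 0)" unfolding finsupp_def
    by (rule finite_subset[of _ "{i}"]) auto
  have "lincomb smult e (\<lambda>j. if j = i then 1 else 0) = (\<Sum>j\<in>{i}. smult (e j) (if j = i then 1 else 0))"
    by (rule lincomb_eq) auto
  also have "\<dots> = e i" by simp
  finally show ?thesis using coords_lincomb[OF b fs] by metis
qed

lemma coords_zero: assumes b: "is_basis smult e"
  shows "coords smult e 0 = (\<lambda>j. 0)"
  using coords_smult[OF b, of 0 0] by simp

lemma coords_sum_basis: assumes b: "is_basis smult e" and fin: "finsupp c"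
  shows "coords smult e (lincomb smult e c) = c" using coords_lincomb[OF b fin] .

end


context ctx begin

definition gs :: "('i::linorder \<Rightarrow> 'v) \<Rightarrow> ('i \<Rightarrow> 'k) \<Rightarrow> ('i \<Rightarrow> 'k) \<Rightarrow> 'i set \<Rightarrow> 'k" where
  "gs e a b S = (\<Sum>i\<in>S. \<Sum>j\<in>S. if i < j then \<sigma> (a i) * f (e i) (e j) * b j else 0)"

lemma gE_gs:
  assumes fS: "finite S" and sa: "supp (coords smult e x) \<subseteq> S" and sb: "supp (coords smult e y) \<subseteq> S"
  shows "gE \<sigma> smult f e x y = gs e (coords smult e x) (coords smult e y) S"
proof -
  define a where "a = coords smult e x"
  define b where "b = coords smult e y"
  have "gE \<sigma> smult f e x y = (\<Sum>(i, j)\<in>{(i, j). a i \<noteq> 0 \<and> b j \<noteq> 0 \<and> i < j}. \<sigma> (a i) * f (e i) (e j) * b j)"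
    unfolding gE_def Let_def a_def b_def ..
  also have "\<dots> = (\<Sum>(i, j)\<in>S \<times> S. if i < j then \<sigma> (a i) * f (e i) (e j) * b j else 0)"
  proof (rule sum.mono_neutral_cong_left)
    show "finite (S \<times> S)" using fS by simp
    show "{(i, j). a i \<noteq> 0 \<and> b j \<noteq> 0 \<and> i < j} \<subseteq> S \<times> S"
      using sa sb unfolding a_def[symmetric] b_def[symmetric] by auto
    show "\<forall>p\<in>S \<times> S - {(i, j). a i \<noteq> 0 \<and> b j \<noteq> 0 \<and> i < j}.
        (case p of (i, j) \<Rightarrow> if i < j then \<sigma> (a i) * f (e i) (e j) * b j else 0) = 0"
    proof
      fix p assume p: "p \<in> S \<times> S - {(i, j). a i \<noteq> 0 \<and> b j \<noteq> 0 \<and> i < j}"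
      obtain i j where ij: "p = (i, j)" by force
      show "(case p of (i, j) \<Rightarrow> if i < j then \<sigma> (a i) * f (e i) (e j) * b j else 0) = 0"
        using p unfolding ij by (cases "a i = 0"; cases "b j = 0") auto
    qed
    show "\<And>p. p \<in> {(i, j). a i \<noteq> 0 \<and> b j \<noteq> 0 \<and> i < j} \<Longrightarrow>
       (case p of (i, j) \<Rightarrow> \<sigma> (a i) * f (e i) (e j) * b j) =
       (case p of (i, j) \<Rightarrow> if i < j then \<sigma> (a i) * f (e i) (e j) * b j else 0)"
      by auto
  qed
  also have "\<dots> = gs e a b S" unfolding gs_def sum.cartesian_product by simp
  finally show ?thesis unfolding a_def b_def .
qed

lemma f_expand: "f (\<Sum>i\<in>S. smult (e i) (a i)) (\<Sum>j\<in>S. smult (e j) (b j))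
   = (\<Sum>i\<in>S. \<Sum>j\<in>S. \<sigma> (a i) * f (e i) (e j) * b j)"
  by (simp only: f_suml f_sumr f_sm) (rule sum.swap)

lemma term_sym: "\<sigma> (\<sigma> b * F * a) * \<epsilon> = \<sigma> a * (\<sigma> F * \<epsilon>) * b"
proof -
  have "\<sigma> (\<sigma> b * F * a) * \<epsilon> = \<sigma> a * \<sigma> F * (\<sigma> (\<sigma> b) * \<epsilon>)" by (simp add: sig_mult mult.assoc)
  also have "\<dots> = \<sigma> a * (\<sigma> F * \<epsilon>) * b" by (simp add: sig_sig_eps mult.assoc)
  finally show ?thesis .
qed

lemma gE_sym:
  assumes b: "is_basis smult e" and fz: "\<forall>i. f (e i) (e i) = 0"
  shows "gE \<sigma> smult f e x y + \<sigma> (gE \<sigma> smult f e y x) * \<epsilon> = f x y"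
proof -
  define a where "a = coords smult e x"
  define c where "c = coords smult e y"
  define S where "S = supp a \<union> supp c"
  have fS: "finite S" unfolding S_def a_def c_def using coords_fin[OF b] by blast
  have g1: "gE \<sigma> smult f e x y = gs e a c S" unfolding a_def c_def
    by (rule gE_gs[OF fS]) (auto simp: S_def a_def c_def)
  have g2: "gE \<sigma> smult f e y x = gs e c a S" unfolding a_def c_def
    by (rule gE_gs[OF fS]) (auto simp: S_def a_def c_def)
  have "\<sigma> (gs e c a S) * \<epsilon> = (\<Sum>i\<in>S. \<Sum>j\<in>S. \<sigma> (if i < j then \<sigma> (c i) * f (e i) (e j) * a j else 0) * \<epsilon>)"
    by (simp only: gs_def sig_sum sum_distrib_right)
  also have "\<dots> = (\<Sum>i\<in>S. \<Sum>j\<in>S. if i < j then \<sigma> (a j) * f (e j) (e i) * c i else 0)"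
    by (rule sum.cong[OF refl], rule sum.cong[OF refl]) (simp add: term_sym f_sym[symmetric])
  also have "\<dots> = (\<Sum>j\<in>S. \<Sum>i\<in>S. if i < j then \<sigma> (a j) * f (e j) (e i) * c i else 0)"
    by (rule sum.swap)
  finally have s2: "\<sigma> (gs e c a S) * \<epsilon> = (\<Sum>i\<in>S. \<Sum>j\<in>S. if j < i then \<sigma> (a i) * f (e i) (e j) * c j else 0)" .
  have "gs e a c S + \<sigma> (gs e c a S) * \<epsilon> =
     (\<Sum>i\<in>S. \<Sum>j\<in>S. (if i < j then \<sigma> (a i) * f (e i) (e j) * c j else 0) + (if j < i then \<sigma> (a i) * f (e i) (e j) * c j else 0))"
    unfolding s2 unfolding gs_def by (simp add: sum.distrib)
  also have "\<dots> = (\<Sum>i\<in>S. \<Sum>j\<in>S. \<sigma> (a i) * f (e i) (e j) * c j)"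
    apply (rule sum.cong[OF refl], rule sum.cong[OF refl])
    subgoal for i j using fz by (cases i j rule: linorder_cases) auto
    done
  also have "\<dots> = f (\<Sum>i\<in>S. smult (e i) (a i)) (\<Sum>j\<in>S. smult (e j) (c j))" by (rule f_expand[symmetric])
  also have "\<dots> = f x y"
    using lincomb_eq[OF fS, of a e] lincomb_eq[OF fS, of c e] coords_props[OF b, of x]
      coords_props[OF b, of y] unfolding a_def c_def S_def by auto
  finally show ?thesis using g1 g2 by simp
qed

lemma gE_smult:
  assumes b: "is_basis smult e"
  shows "gE \<sigma> smult f e (smult x l) (smult x l) = \<sigma> l * gE \<sigma> smult f e x x * l"
proof -
  define a where "a = coords smult e x"
  define S where "S = supp a"
  have fS: "finite S" unfolding S_def a_def using coords_fin[OF b] by blast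
  have ca: "coords smult e (smult x l) = (\<lambda>i. a i * l)" unfolding a_def by (rule coords_smult[OF b])
  have g1: "gE \<sigma> smult f e x x = gs e a a S" unfolding a_def
    by (rule gE_gs[OF fS]) (auto simp: S_def a_def)
  have g2: "gE \<sigma> smult f e (smult x l) (smult x l) = gs e (\<lambda>i. a i * l) (\<lambda>i. a i * l) S" unfolding ca[symmetric]
    by (rule gE_gs[OF fS]) (auto simp: S_def ca)
  have "gs e (\<lambda>i. a i * l) (\<lambda>i. a i * l) S = \<sigma> l * gs e a a S * l"
    unfolding gs_def sum_distrib_left sum_distrib_right
    by (rule sum.cong[OF refl], rule sum.cong[OF refl]) (simp add: sig_mult mult.assoc)
  thus ?thesis using g1 g2 by simp
qed

lemma gE_add:
  assumes b: "is_basis smult e"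
  shows "gE \<sigma> smult f e (x + y) (x + y) = gE \<sigma> smult f e x x + gE \<sigma> smult f e x y
     + gE \<sigma> smult f e y x + gE \<sigma> smult f e y y"
proof -
  define a where "a = coords smult e x"
  define c where "c = coords smult e y"
  define S where "S = supp a \<union> supp c"
  have fS: "finite S" unfolding S_def a_def c_def using coords_fin[OF b] by blast
  have cs: "coords smult e (x + y) = (\<lambda>i. a i + c i)" unfolding a_def c_def by (rule coords_add[OF b])
  have g0: "gE \<sigma> smult f e (x + y) (x + y) = gs e (\<lambda>i. a i + c i) (\<lambda>i. a i + c i) S"
    unfolding cs[symmetric] by (rule gE_gs[OF fS]) (auto simp: S_def cs)
  have g1: "gE \<sigma> smult f e x x = gs e a a S" unfolding a_def
    by (rule gE_gs[OF fS]) (auto simp: S_def a_def c_def)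
  have g2: "gE \<sigma> smult f e x y = gs e a c S" unfolding a_def c_def
    by (rule gE_gs[OF fS]) (auto simp: S_def a_def c_def)
  have g3: "gE \<sigma> smult f e y x = gs e c a S" unfolding a_def c_def
    by (rule gE_gs[OF fS]) (auto simp: S_def a_def c_def)
  have g4: "gE \<sigma> smult f e y y = gs e c c S" unfolding c_def
    by (rule gE_gs[OF fS]) (auto simp: S_def a_def c_def)
  have "gs e (\<lambda>i. a i + c i) (\<lambda>i. a i + c i) S = gs e a a S + gs e a c S + gs e c a S + gs e c c S"
    unfolding gs_def sum.distrib[symmetric]
    by (rule sum.cong[OF refl], rule sum.cong[OF refl]) (simp add: sig_add algebra_simps)
  thus ?thesis using g0 g1 g2 g3 g4 by simp
qed

lemma gE_basis:
  assumes b: "is_basis smult e"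
  shows "gE \<sigma> smult f e (e i) (e i) = 0"
proof -
  have "gE \<sigma> smult f e (e i) (e i) = gs e (coords smult e (e i)) (coords smult e (e i)) {i}"
    by (rule gE_gs) (auto simp: coords_basis[OF b])
  thus ?thesis unfolding gs_def by simp
qed

lemma gE_zero:
  assumes b: "is_basis smult e"
  shows "gE \<sigma> smult f e 0 0 = 0"
proof -
  have "gE \<sigma> smult f e 0 0 = gs e (coords smult e 0) (coords smult e 0) {}"
    by (rule gE_gs) (auto simp: coords_zero[OF b])
  thus ?thesis unfolding gs_def by simp
qed

end


context ctx begin

lemma gq_cs: "gen_quad_form \<sigma> \<epsilon> smult R q f \<Longrightarrow> closed_subgroup \<sigma> \<epsilon> R"
  unfolding gen_quad_form_def by blast
lemma gq_sm: "gen_quad_form \<sigma> \<epsilon> smult R q f \<Longrightarrow> q (smult x l) - circ \<sigma> (q x) l \<in> R"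
  unfolding gen_quad_form_def by blast
lemma gq_add: "gen_quad_form \<sigma> \<epsilon> smult R q f \<Longrightarrow> q (x + y) - (q x + q y + f x y) \<in> R"
  unfolding gen_quad_form_def by blast

lemma R_notall:
  assumes gq: "gen_quad_form \<sigma> \<epsilon> smult R q f" and nt: "nontrivial_gqf R q"
    and u: "\<forall>m. u * m \<in> R"
  shows "u = 0"
proof (rule ccontr)
  assume "u \<noteq> 0"
  hence "\<forall>t. t \<in> R" using u by (metis mult.assoc right_inverse mult_1_left)
  thus False using nt unfolding nontrivial_gqf_def by blast
qed

lemma R_Ksym:
  assumes gq: "gen_quad_form \<sigma> \<epsilon> smult R q f" and nt: "nontrivial_gqf R q" and r: "r \<in> R"
  shows "r \<in> Ksym \<sigma> \<epsilon>"
proof -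
  have cs: "closed_subgroup \<sigma> \<epsilon> R" by (rule gq_cs[OF gq])
  have "\<forall>m. (r + \<sigma> r * \<epsilon>) * m \<in> R"
  proof
    fix m
    have "circ \<sigma> r (1 + m) - circ \<sigma> r 1 - circ \<sigma> r m \<in> R"
      using cs r by (intro cs_diff cs_circ) auto
    moreover have "circ \<sigma> r (1 + m) - circ \<sigma> r 1 - circ \<sigma> r m = r * m + \<sigma> m * r"
      unfolding circ_def by (simp add: sig_add algebra_simps)
    ultimately have A: "r * m + \<sigma> m * r \<in> R" by simp
    have B: "\<sigma> m * r - \<sigma> (\<sigma> m * r) * \<epsilon> \<in> R" using cs Kse_mem by (rule cs_Kse)
    have "\<sigma> (\<sigma> m * r) * \<epsilon> = \<sigma> r * (\<sigma> (\<sigma> m) * \<epsilon>)" by (simp add: sig_mult mult.assoc)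
    also have "\<dots> = \<sigma> r * \<epsilon> * m" by (simp add: sig_sig_eps mult.assoc)
    finally have "(r * m + \<sigma> m * r) - (\<sigma> m * r - \<sigma> (\<sigma> m * r) * \<epsilon>) = (r + \<sigma> r * \<epsilon>) * m"
      by (simp add: algebra_simps)
    thus "(r + \<sigma> r * \<epsilon>) * m \<in> R" using cs_diff[OF cs A B] by simp
  qed
  hence "r + \<sigma> r * \<epsilon> = 0" by (rule R_notall[OF gq nt])
  thus ?thesis unfolding Ksym_def by (simp add: eq_neg_iff_add_eq_0)
qed

lemma q_sm_R:
  assumes gq: "gen_quad_form \<sigma> \<epsilon> smult R q f" and qx: "q x \<in> R"
  shows "q (smult x l) \<in> R"
proof -
  have cs: "closed_subgroup \<sigma> \<epsilon> R" by (rule gq_cs[OF gq])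
  have "q (smult x l) - circ \<sigma> (q x) l + circ \<sigma> (q x) l \<in> R"
    using cs qx gq_sm[OF gq] by (intro cs_add cs_circ) auto
  thus ?thesis by simp
qed

lemma q0_R:
  assumes gq: "gen_quad_form \<sigma> \<epsilon> smult R q f"
  shows "q 0 \<in> R"
  using gq_sm[OF gq, of 0 0] by (simp add: circ_def)

lemma f_diag_zero:
  assumes gq: "gen_quad_form \<sigma> \<epsilon> smult R q f" and nt: "nontrivial_gqf R q" and qx: "q x \<in> R"
  shows "f x x = 0"
proof -
  have cs: "closed_subgroup \<sigma> \<epsilon> R" by (rule gq_cs[OF gq])
  have "\<forall>m. f x x * m \<in> R"
  proof
    fix m
    have A: "q (smult x 1 + smult x m) - (q (smult x 1) + q (smult x m) + f (smult x 1) (smult x m)) \<in> R"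
      by (rule gq_add[OF gq])
    have B: "q (smult x 1 + smult x m) \<in> R" unfolding sm_ldist[symmetric] by (rule q_sm_R[OF gq qx])
    have C: "q (smult x 1) + q (smult x m) \<in> R" using cs q_sm_R[OF gq qx] qx by (intro cs_add) auto
    have "f (smult x 1) (smult x m) = q (smult x 1 + smult x m) - (q (smult x 1) + q (smult x m)) -
       (q (smult x 1 + smult x m) - (q (smult x 1) + q (smult x m) + f (smult x 1) (smult x m)))"
      by (simp add: algebra_simps)
    hence "f (smult x 1) (smult x m) \<in> R" using cs_diff[OF cs cs_diff[OF cs B C] A] by simp
    thus "f x x * m \<in> R" using f_sm[of x 1 x m] by simp
  qed
  thus ?thesis by (rule R_notall[OF gq nt])
qed

lemma gs_insert_max:
  assumes fA: "finite A" and lt: "\<forall>i\<in>A. i < m"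
  shows "gs e a a (insert m A) = gs e a a A + (\<Sum>i\<in>A. \<sigma> (a i) * f (e i) (e m) * a m)"
proof -
  have mA: "m \<notin> A" using lt by auto
  have t1: "(\<Sum>j\<in>insert m A. if m < j then \<sigma> (a m) * f (e m) (e j) * a j else 0) = 0"
    using lt by (intro sum.neutral) auto
  have t2: "\<And>i. i \<in> A \<Longrightarrow> (\<Sum>j\<in>insert m A. if i < j then \<sigma> (a i) * f (e i) (e j) * a j else 0)
      = \<sigma> (a i) * f (e i) (e m) * a m + (\<Sum>j\<in>A. if i < j then \<sigma> (a i) * f (e i) (e j) * a j else 0)"
    using lt fA mA by (simp add: sum.insert)
  show ?thesis unfolding gs_def using fA mA t1 t2 by (simp add: sum.insert sum.distrib)
qed

lemma q_expand:
  assumes gq: "gen_quad_form \<sigma> \<epsilon> smult R q f" and sing: "\<forall>i. q (e i) \<in> R" and fS: "finite S"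
  shows "q (\<Sum>i\<in>S. smult (e i) (a i)) - gs e a a S \<in> R"
  using fS
proof (induction S rule: finite_linorder_max_induct)
  case empty
  then show ?case using q0_R[OF gq] by (simp add: gs_def)
next
  case (insert m A)
  have cs: "closed_subgroup \<sigma> \<epsilon> R" by (rule gq_cs[OF gq])
  have mA: "m \<notin> A" using insert by auto
  define Y where "Y = (\<Sum>i\<in>A. smult (e i) (a i))"
  define z where "z = smult (e m) (a m)"
  have s: "(\<Sum>i\<in>insert m A. smult (e i) (a i)) = Y + z"
    using insert mA by (simp add: Y_def z_def sum.insert add.commute)
  have fY: "f Y z = (\<Sum>i\<in>A. \<sigma> (a i) * f (e i) (e m) * a m)"
    unfolding Y_def z_def by (simp add: f_suml f_sm)
  have A: "q (Y + z) - (q Y + q z + f Y z) \<in> R" by (rule gq_add[OF gq])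
  have B: "q Y - gs e a a A \<in> R" using insert Y_def by simp
  have C: "q z \<in> R" unfolding z_def using sing q_sm_R[OF gq] by blast
  have "q (Y + z) - gs e a a (insert m A) = (q (Y + z) - (q Y + q z + f Y z)) + (q Y - gs e a a A) + q z"
    using gs_insert_max[OF insert(1) insert(2)] fY by (simp add: algebra_simps)
  hence "q (Y + z) - gs e a a (insert m A) \<in> R" using cs A B C by (metis cs_add)
  thus ?case using s by simp
qed

lemma q_gE:
  assumes gq: "gen_quad_form \<sigma> \<epsilon> smult R q f" and sing: "\<forall>i. q (e i) \<in> R"
    and b: "is_basis smult e"
  shows "q x - gE \<sigma> smult f e x x \<in> R"
proof -
  define a where "a = coords smult e x"
  define S where "S = supp a"
  have fS: "finite S" unfolding S_def a_def using coords_fin[OF b] by blast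
  have g: "gE \<sigma> smult f e x x = gs e a a S" unfolding a_def
    by (rule gE_gs[OF fS]) (auto simp: S_def a_def)
  have x: "x = (\<Sum>i\<in>S. smult (e i) (a i))"
    using lincomb_eq[OF fS, of a e] coords_props[OF b, of x] unfolding a_def S_def by auto
  show ?thesis using q_expand[OF gq sing fS, of a] g x by simp
qed

end


context ctx begin

lemma delta_add:
  assumes b: "is_basis smult e" and b': "is_basis smult e'"
    and fz: "\<forall>i. f (e i) (e i) = 0" and fz': "\<forall>i. f (e' i) (e' i) = 0"
  shows "deltaEE \<sigma> smult f e e' (x + y) - (deltaEE \<sigma> smult f e e' x + deltaEE \<sigma> smult f e e' y) \<in> Kse \<sigma> \<epsilon>"
proof -
  let ?u = "gE \<sigma> smult f e y x" and ?v = "gE \<sigma> smult f e' y x"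
  have 1: "gE \<sigma> smult f e x y = f x y - \<sigma> ?u * \<epsilon>" using gE_sym[OF b fz, of x y] by (simp add: algebra_simps)
  have 2: "gE \<sigma> smult f e' x y = f x y - \<sigma> ?v * \<epsilon>" using gE_sym[OF b' fz', of x y] by (simp add: algebra_simps)
  have "deltaEE \<sigma> smult f e e' (x + y) - (deltaEE \<sigma> smult f e e' x + deltaEE \<sigma> smult f e e' y)
      = (?u - \<sigma> ?u * \<epsilon>) - (?v - \<sigma> ?v * \<epsilon>)"
    unfolding deltaEE_def gE_add[OF b] gE_add[OF b'] 1 2 by (simp add: algebra_simps)
  thus ?thesis by (simp add: Kse_diff Kse_mem)
qed

lemma delta_smult:
  assumes b: "is_basis smult e" and b': "is_basis smult e'"
  shows "deltaEE \<sigma> smult f e e' (smult x l) = circ \<sigma> (deltaEE \<sigma> smult f e e' x) l"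
  unfolding deltaEE_def gE_smult[OF b] gE_smult[OF b'] circ_def by (simp add: algebra_simps)

lemma delta_basis:
  assumes b: "is_basis smult e"
  shows "deltaEE \<sigma> smult f e e' (e i) = - gE \<sigma> smult f e' (e i) (e i)"
  unfolding deltaEE_def gE_basis[OF b] by simp

lemma delta_zero:
  assumes b: "is_basis smult e" and b': "is_basis smult e'"
  shows "deltaEE \<sigma> smult f e e' 0 = 0"
  unfolding deltaEE_def gE_zero[OF b] gE_zero[OF b'] by simp

lemma delta_formula:
  assumes b: "is_basis smult e" and b': "is_basis smult e'"
    and fz: "\<forall>i. f (e i) (e i) = 0" and fz': "\<forall>i. f (e' i) (e' i) = 0"
    and fS: "finite S"
  shows "deltaEE \<sigma> smult f e e' (\<Sum>i\<in>S. smult (e i) (c i))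
     + (\<Sum>i\<in>S. circ \<sigma> (gE \<sigma> smult f e' (e i) (e i)) (c i)) \<in> Kse \<sigma> \<epsilon>"
  using fS
proof (induction S rule: finite_induct)
  case empty
  then show ?case using delta_zero[OF b b'] Kse0 by simp
next
  case (insert i A)
  let ?d = "deltaEE \<sigma> smult f e e'"
  let ?z = "smult (e i) (c i)" and ?Y = "\<Sum>i\<in>A. smult (e i) (c i)"
  let ?g = "\<lambda>i. circ \<sigma> (gE \<sigma> smult f e' (e i) (e i)) (c i)"
  have dz: "?d ?z = - ?g i"
    unfolding delta_smult[OF b b'] delta_basis[OF b] circ_uminus ..
  have eq: "?d (?z + ?Y) + (?g i + sum ?g A) = (?d (?z + ?Y) - (?d ?z + ?d ?Y)) + (?d ?Y + sum ?g A)"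
    using dz by (simp add: algebra_simps)
  have mem: "(?d (?z + ?Y) - (?d ?z + ?d ?Y)) + (?d ?Y + sum ?g A) \<in> Kse \<sigma> \<epsilon>"
    by (rule Kse_add[OF delta_add[OF b b' fz fz'] insert.IH])
  have s1: "(\<Sum>i\<in>insert i A. smult (e i) (c i)) = ?z + ?Y" by (rule sum.insert[OF insert.hyps])
  have s2: "sum ?g (insert i A) = ?g i + sum ?g A" by (rule sum.insert[OF insert.hyps])
  show ?case unfolding s1 s2 eq by (rule mem)
qed

lemma delta_in:
  assumes b: "is_basis smult e" and b': "is_basis smult e'"
    and fz: "\<forall>i. f (e i) (e i) = 0" and fz': "\<forall>i. f (e' i) (e' i) = 0"
  shows "deltaEE \<sigma> smult f e e' x \<in> REE \<sigma> \<epsilon> smult f e e'"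
proof -
  define c where "c = coords smult e x"
  define S where "S = supp c"
  have fS: "finite S" unfolding S_def c_def using coords_fin[OF b] by blast
  have x0: "x = lincomb smult e c" unfolding c_def by (rule conjunct2[OF coords_props[OF b]])
  have x: "x = (\<Sum>i\<in>S. smult (e i) (c i))"
    unfolding S_def using x0 lincomb_eq[OF fS[unfolded S_def], of c e] by simp
  let ?g = "\<lambda>i. circ \<sigma> (gE \<sigma> smult f e' (e i) (e i)) (c i)"
  have cs: "closed_subgroup \<sigma> \<epsilon> (REE \<sigma> \<epsilon> smult f e e')" unfolding REE_def by (rule hull_cs)
  have K0: "deltaEE \<sigma> smult f e e' (\<Sum>i\<in>S. smult (e i) (c i)) + sum ?g S \<in> Kse \<sigma> \<epsilon>"
    by (rule delta_formula[OF b b' fz fz' fS])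
  have K: "deltaEE \<sigma> smult f e e' x + sum ?g S \<in> REE \<sigma> \<epsilon> smult f e e'"
    by (subst x) (rule cs_Kse[OF cs K0])
  have gi: "\<And>i. gE \<sigma> smult f e' (e i) (e i) \<in> REE \<sigma> \<epsilon> smult f e e'"
    unfolding REE_def by (rule subsetD[OF hull_sup]) (rule rangeI)
  have G: "sum ?g S \<in> REE \<sigma> \<epsilon> smult f e e'"
    by (rule cs_sum[OF cs], rule cs_circ[OF cs gi])
  show ?thesis using cs_diff[OF cs K G] by simp
qed

lemma delta_surj:
  assumes b: "is_basis smult e" and b': "is_basis smult e'"
    and fz: "\<forall>i. f (e i) (e i) = 0" and fz': "\<forall>i. f (e' i) (e' i) = 0"
  shows "REE \<sigma> \<epsilon> smult f e e' \<subseteq> {t. \<exists>x. deltaEE \<sigma> smult f e e' x - t \<in> Kse \<sigma> \<epsilon>}"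
  unfolding REE_def
proof (rule hull_min)
  let ?d = "deltaEE \<sigma> smult f e e'"
  show "closed_subgroup \<sigma> \<epsilon> {t. \<exists>x. ?d x - t \<in> Kse \<sigma> \<epsilon>}"
    unfolding closed_subgroup_def
  proof (intro conjI ballI allI subsetI)
    fix t assume "t \<in> Kse \<sigma> \<epsilon>"
    thus "t \<in> {t. \<exists>x. ?d x - t \<in> Kse \<sigma> \<epsilon>}"
      using delta_zero[OF b b'] Kse_uminus by (intro CollectI exI[of _ 0]) simp
  next
    fix a c assume "a \<in> {t. \<exists>x. ?d x - t \<in> Kse \<sigma> \<epsilon>}" "c \<in> {t. \<exists>x. ?d x - t \<in> Kse \<sigma> \<epsilon>}"
    then obtain x y where x: "?d x - a \<in> Kse \<sigma> \<epsilon>" and y: "?d y - c \<in> Kse \<sigma> \<epsilon>" by blast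
    have k: "?d ((x - y) + y) - (?d (x - y) + ?d y) \<in> Kse \<sigma> \<epsilon>" by (rule delta_add[OF b b' fz fz'])
    have eq: "?d (x - y) - (a - c) = (?d x - a) - (?d y - c) - (?d ((x - y) + y) - (?d (x - y) + ?d y))"
      by (simp add: algebra_simps)
    have "?d (x - y) - (a - c) \<in> Kse \<sigma> \<epsilon>" by (subst eq) (rule Kse_diff[OF Kse_diff[OF x y] k])
    thus "a - c \<in> {t. \<exists>x. ?d x - t \<in> Kse \<sigma> \<epsilon>}" by blast
  next
    fix a l assume "a \<in> {t. \<exists>x. ?d x - t \<in> Kse \<sigma> \<epsilon>}"
    then obtain x where x: "?d x - a \<in> Kse \<sigma> \<epsilon>" by blast
    have "?d (smult x l) - circ \<sigma> a l = circ \<sigma> (?d x - a) l"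
      unfolding delta_smult[OF b b'] circ_diff ..
    hence "?d (smult x l) - circ \<sigma> a l \<in> Kse \<sigma> \<epsilon>" using Kse_circ[OF x] by simp
    thus "circ \<sigma> a l \<in> {t. \<exists>x. ?d x - t \<in> Kse \<sigma> \<epsilon>}" by blast
  qed
  show "range (\<lambda>i. gE \<sigma> smult f e' (e i) (e i)) \<subseteq> {t. \<exists>x. ?d x - t \<in> Kse \<sigma> \<epsilon>}"
  proof
    fix t assume "t \<in> range (\<lambda>i. gE \<sigma> smult f e' (e i) (e i))"
    then obtain i where t: "t = gE \<sigma> smult f e' (e i) (e i)" by blast
    have k: "?d ((- e i) + e i) - (?d (- e i) + ?d (e i)) \<in> Kse \<sigma> \<epsilon>" by (rule delta_add[OF b b' fz fz'])
    hence "?d (- e i) - t \<in> Kse \<sigma> \<epsilon>"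
      using Kse_uminus[OF k] delta_zero[OF b b'] delta_basis[OF b, of e' i] t by (simp add: algebra_simps)
    thus "t \<in> {t. \<exists>x. ?d x - t \<in> Kse \<sigma> \<epsilon>}" by blast
  qed
qed

end

theorem mainTheorem11:
  fixes \<sigma> :: "'k::division_ring \<Rightarrow> 'k" and \<epsilon> :: 'k
    and smult :: "'v::ab_group_add \<Rightarrow> 'k \<Rightarrow> 'v"
    and R :: "'k set" and q :: "'v \<Rightarrow> 'k" and f :: "'v \<Rightarrow> 'v \<Rightarrow> 'k"
    and e e' :: "'i::linorder \<Rightarrow> 'v"
  assumes "admissible_pair \<sigma> \<epsilon>"
    and "right_vector_space smult"
    and "gen_quad_form \<sigma> \<epsilon> smult R q f"
    and "nontrivial_gqf R q"
    and "is_basis smult e" and "is_basis smult e'"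
    and "\<forall>i. q_singular R q (e i)" and "\<forall>i. q_singular R q (e' i)"
  shows "rsubspace \<sigma> \<epsilon> R (REE \<sigma> \<epsilon> smult f e e')
    \<and> (\<forall>x y. deltaEE \<sigma> smult f e e' (x + y)
              - (deltaEE \<sigma> smult f e e' x + deltaEE \<sigma> smult f e e' y) \<in> Kse \<sigma> \<epsilon>)
    \<and> (\<forall>x l. deltaEE \<sigma> smult f e e' (smult x l)
              - circ \<sigma> (deltaEE \<sigma> smult f e e' x) l \<in> Kse \<sigma> \<epsilon>)
    \<and> (\<forall>x. deltaEE \<sigma> smult f e e' x \<in> REE \<sigma> \<epsilon> smult f e e')
    \<and> (\<forall>t\<in>REE \<sigma> \<epsilon> smult f e e'. \<exists>x. deltaEE \<sigma> smult f e e' x - t \<in> Kse \<sigma> \<epsilon>)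
    \<and> (\<forall>c. finsupp c \<longrightarrow>
          deltaEE \<sigma> smult f e e' (lincomb smult e c)
          - (- (\<Sum>i\<in>{i. c i \<noteq> 0}. circ \<sigma> (gE \<sigma> smult f e' (e i) (e i)) (c i))) \<in> Kse \<sigma> \<epsilon>)
    \<and> (\<forall>x. deltaEE \<sigma> smult f e' e x = - deltaEE \<sigma> smult f e e' x)
    \<and> REE \<sigma> \<epsilon> smult f e e' = REE \<sigma> \<epsilon> smult f e' e"
proof -
  have gq: "gen_quad_form \<sigma> \<epsilon> smult R q f" by fact
  have nt: "nontrivial_gqf R q" by fact
  have b: "is_basis smult e" and b': "is_basis smult e'" by fact+
  have ses: "trace_valued_sesq \<sigma> \<epsilon> smult f" using gq unfolding gen_quad_form_def by blast
  interpret ctx \<sigma> \<epsilon> smult f using assms(1,2) ses by unfold_locales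
  have sing: "\<forall>i. q (e i) \<in> R" and sing': "\<forall>i. q (e' i) \<in> R"
    using assms(7,8) unfolding q_singular_def by blast+
  have fz: "\<forall>i. f (e i) (e i) = 0" using sing f_diag_zero[OF gq nt] by blast
  have fz': "\<forall>i. f (e' i) (e' i) = 0" using sing' f_diag_zero[OF gq nt] by blast
  have csR: "closed_subgroup \<sigma> \<epsilon> R" by (rule gq_cs[OF gq])
  have REER: "REE \<sigma> \<epsilon> smult f e e' \<subseteq> R"
    unfolding REE_def
  proof (rule hull_min[OF csR], rule subsetI)
    fix t assume "t \<in> range (\<lambda>i. gE \<sigma> smult f e' (e i) (e i))"
    then obtain i where t: "t = gE \<sigma> smult f e' (e i) (e i)" by blast
    have "q (e i) - (q (e i) - gE \<sigma> smult f e' (e i) (e i)) \<in> R"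
      using cs_diff[OF csR] sing q_gE[OF gq sing' b'] by blast
    thus "t \<in> R" using t by simp
  qed
  have P1: "rsubspace \<sigma> \<epsilon> R (REE \<sigma> \<epsilon> smult f e e')"
    unfolding rsubspace_def using REER R_Ksym[OF gq nt] unfolding REE_def
    using hull_cs by blast
  have P6: "\<forall>c. finsupp c \<longrightarrow>
          deltaEE \<sigma> smult f e e' (lincomb smult e c)
          - (- (\<Sum>i\<in>{i. c i \<noteq> 0}. circ \<sigma> (gE \<sigma> smult f e' (e i) (e i)) (c i))) \<in> Kse \<sigma> \<epsilon>"
  proof (intro allI impI)
    fix c :: "'i \<Rightarrow> 'k" assume "finsupp c"
    hence fS: "finite {i. c i \<noteq> 0}" unfolding finsupp_def .
    show "deltaEE \<sigma> smult f e e' (lincomb smult e c)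
          - (- (\<Sum>i\<in>{i. c i \<noteq> 0}. circ \<sigma> (gE \<sigma> smult f e' (e i) (e i)) (c i))) \<in> Kse \<sigma> \<epsilon>"
      using delta_formula[OF b b' fz fz' fS, of c] unfolding lincomb_def by simp
  qed
  have G1: "\<And>i. gE \<sigma> smult f e' (e i) (e i) = deltaEE \<sigma> smult f e' e (e i)"
    unfolding deltaEE_def gE_basis[OF b] by simp
  have G2: "\<And>i. gE \<sigma> smult f e (e' i) (e' i) = deltaEE \<sigma> smult f e e' (e' i)"
    unfolding deltaEE_def gE_basis[OF b'] by simp
  have P8a: "REE \<sigma> \<epsilon> smult f e e' \<subseteq> REE \<sigma> \<epsilon> smult f e' e"
    unfolding REE_def[of _ _ _ _ e e']
    apply (rule hull_min)
     apply (unfold REE_def)[1]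
     apply (rule hull_cs)
    using delta_in[OF b' b fz' fz] G1 unfolding REE_def by auto
  have P8b: "REE \<sigma> \<epsilon> smult f e' e \<subseteq> REE \<sigma> \<epsilon> smult f e e'"
    unfolding REE_def[of _ _ _ _ e' e]
    apply (rule hull_min)
     apply (unfold REE_def)[1]
     apply (rule hull_cs)
    using delta_in[OF b b' fz fz'] G2 unfolding REE_def by auto
  show ?thesis
    using P1 delta_add[OF b b' fz fz'] delta_smult[OF b b'] Kse0 delta_in[OF b b' fz fz']
      delta_surj[OF b b' fz fz'] P6 P8a P8b
    by (auto simp: deltaEE_def)
qed

end
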